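(* Let $a_0, a_1 \in \mathbb{Z}$ and let $u_0, u_1$ be positive rational numbers with $u_0 > u_1$ such that \[ a_0 \arctan u_0 + a_1 \arctan u_1 = \frac{\pi}{4}. \] Then the real number $\alpha := \dfrac{\arctan u_0}{\arctan u_1}$ is irrational. *)

theory Defs
  imports Complex_Main
begin

end

theory Submission
  imports Defs "HOL-Computational_Algebra.Primes"
begin

lemma cos_mod:
  fixes M n :: int assumes "n > 0"
  shows "cos (of_int M * pi / of_int n) = cos (of_int (M mod (2*n)) * pi / of_int n)"
proof -
  have e: "of_int M = (of_int (M mod (2*n)) + of_int (2*n) * of_int (M div (2*n)) :: real)"
    by (metis of_int_add of_int_mult mod_mult_div_eq add.commute)
  have "of_int M * pi / of_int n = of_int (M mod (2*n)) * pi / of_int n + (2*pi) * of_int (M div (2*n))"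
    using assms unfolding e by (simp add: field_simps)
  thus ?thesis by (simp add: cos_add)
qed

lemma coprime_step:
  fixes c b :: int assumes "coprime c b"
  shows "coprime (c^2 - 2*(b^(2^k))^2) b"
proof -
  have "b dvd b^(2^k)" using dvd_power[of "2^k" b] by simp
  hence "b dvd 2*(b^(2^k))^2" by (simp add: power2_eq_square)
  then obtain t where t: "2*(b^(2^k))^2 = b*t" by blast
  have "gcd (c^2 - 2*(b^(2^k))^2) b = gcd (c^2) b"
    unfolding t by (metis gcd_add_mult gcd.commute diff_conv_add_uminus mult_minus_right mult.commute add.commute)
  moreover have "coprime (c^2) b" using assms by simp
  ultimately show ?thesis by (simp add: coprime_iff_gcd_eq_1)
qed

lemma niven2:
  fixes m n :: int
  assumes n: "n > 0" and xq: "2 * cos (of_int m * pi / of_int n) \<in> \<rat>"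
  shows "2 * cos (of_int m * pi / of_int n) \<in> \<int>"
proof -
  define y where "y k = 2 * cos (of_int (2^k * m) * pi / of_int n)" for k :: nat
  have rec: "y (Suc k) = (y k)^2 - 2" for k
  proof -
    have e: "of_int (2^(Suc k) * m) * pi / of_int n = 2 * (of_int (2^k * m) * pi / of_int n)"
      by simp
    have "y (Suc k) = 2 * cos (2 * (of_int (2^k * m) * pi / of_int n))" unfolding y_def by (simp only: e)
    also have "\<dots> = (y k)^2 - 2" unfolding y_def cos_double_cos by (simp add: power2_eq_square)
    finally show ?thesis .
  qed
  have "range y \<subseteq> (\<lambda>j. 2 * cos (of_int j * pi / of_int n)) ` {0..<2*n}"
  proof
    fix v assume "v \<in> range y"
    then obtain k where k: "v = y k" by blast
    have "v = 2 * cos (of_int ((2^k * m) mod (2*n)) * pi / of_int n)"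
      unfolding k y_def using cos_mod[OF n] by simp
    moreover have "(2^k * m) mod (2*n) \<in> {0..<2*n}" using n by simp
    ultimately show "v \<in> (\<lambda>j. 2 * cos (of_int j * pi / of_int n)) ` {0..<2*n}" by blast
  qed
  hence fin: "finite (range y)" by (rule finite_subset) simp
  have y0: "y 0 = 2 * cos (of_int m * pi / of_int n)" unfolding y_def by simp
  obtain a b where b: "b > 0" and cop: "coprime a b" and ab: "y 0 = of_int a / of_int b"
    using xq y0 by (metis Rats_cases')
  show ?thesis
  proof (cases "b = 1")
    case True thus ?thesis using ab y0 by simp
  next
    case False
    hence b1: "b > 1" using b by simp
    have den: "\<exists>c. coprime c b \<and> y k = of_int c / of_int b ^ (2^k)" for k
    proof (induction k)
      case 0 thus ?case using ab cop by auto
    next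
      case (Suc k)
      then obtain c where c: "coprime c b" "y k = of_int c / of_int b ^ (2^k)" by blast
      have bne: "(of_int b :: real) ^ (2^k) \<noteq> 0" using b by simp
      have bb: "(of_int b::real)^(2^Suc k) = ((of_int b)^(2^k))^2"
        by (simp add: power_mult[symmetric] mult.commute)
      have "y (Suc k) = (of_int c / of_int b ^ (2^k))^2 - 2" unfolding rec c(2) ..
      also have "\<dots> = (of_int c ^ 2 - 2 * ((of_int b)^(2^k))^2) / ((of_int b)^(2^k))^2"
        using bne by (simp add: power_divide diff_divide_distrib)
      also have "\<dots> = of_int (c^2 - 2*(b^(2^k))^2) / of_int b ^ (2^Suc k)"
        unfolding bb by simp
      finally have "y (Suc k) = of_int (c^2 - 2*(b^(2^k))^2) / of_int b ^ (2^Suc k)" .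
      thus ?case using coprime_step[OF c(1)] by blast
    qed
    have "inj y"
    proof (rule injI, rule ccontr)
      fix k l assume eq: "y k = y l" and ne: "k \<noteq> l"
      have gen: "False" if kl: "k < l" and eq: "y k = y l" for k l
      proof -
        obtain c where c: "coprime c b" "y k = of_int c / of_int b ^ (2^k)" using den by blast
        obtain d where d: "coprime d b" "y l = of_int d / of_int b ^ (2^l)" using den by blast
        have lt: "(2::nat)^k < 2^l" using kl by simp
        define e where "e = 2^l - (2::nat)^k"
        have e0: "e > 0" and el: "2^l = 2^k + e" using lt unfolding e_def by auto
        have "(of_int c :: real) * of_int b ^ (2^l) = of_int d * of_int b ^ (2^k)"
          using eq c(2) d(2) b by (simp add: field_simps)
        hence "c * b ^ (2^l) = d * b ^ (2^k)" by (metis of_int_eq_iff of_int_mult of_int_power)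
        hence "(c * b ^ e) * b ^ (2^k) = d * b ^ (2^k)" unfolding el by (simp add: power_add algebra_simps)
        hence "c * b ^ e = d" using b by simp
        moreover have "b dvd b ^ e" using e0 by (simp add: dvd_power)
        ultimately have "b dvd d" by (metis dvd_mult)
        hence "is_unit b" using d(1) by (metis coprime_common_divisor dvd_refl)
        thus False using b1 by simp
      qed
      show False using ne gen eq by (metis linorder_neqE_nat)
    qed
    hence "infinite (range y)" using finite_imageD infinite_UNIV_nat by blast
    thus ?thesis using fin by blast
  qed
qed

lemma no_rat_sqrt3:
  fixes v :: real assumes "v \<in> \<rat>" shows "v^2 \<noteq> 3"
proof
  assume v2: "v^2 = 3"
  obtain a b where b: "b > 0" and cop: "coprime a b" and ab: "v = of_int a / of_int b"
    using assms by (metis Rats_cases')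
  have "(of_int a :: real)^2 = 3 * (of_int b)^2" using v2 ab b by (simp add: field_simps)
  hence eq: "a^2 = 3 * b^2" by (metis of_int_eq_iff of_int_mult of_int_power of_int_numeral)
  have p3: "prime (3::int)" by simp
  have "3 dvd a^2" using eq by simp
  hence "3 dvd a" using p3 prime_dvd_power by blast
  then obtain k where k: "a = 3 * k" by blast
  hence "b^2 = 3 * k^2" using eq by (simp add: power2_eq_square)
  hence "3 dvd b^2" by simp
  hence "3 dvd b" using p3 prime_dvd_power by blast
  hence "is_unit (3::int)" using cop \<open>3 dvd a\<close> by (metis coprime_common_divisor)
  thus False by simp
qed

lemma key:
  fixes u :: real and m n :: int
  assumes uq: "u \<in> \<rat>" and u0: "u > 0" and n0: "n \<noteq> 0"
    and h: "2 * arctan u = of_int m * pi / of_int n"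
  shows "u = 1"
proof -
  obtain m' n' :: int where n': "n' > 0" and h': "2 * arctan u = of_int m' * pi / of_int n'"
  proof (cases "n > 0")
    case True thus ?thesis using that h by blast
  next
    case False
    hence "-n > 0" using n0 by simp
    moreover have "2 * arctan u = of_int (-m) * pi / of_int (-n)" using h by simp
    ultimately show ?thesis using that by blast
  qed
  have pos: "1 + u^2 > 0" by (simp add: add_pos_nonneg)
  have "cos (2 * arctan u) = 2 * (cos (arctan u))^2 - 1" by (rule cos_double_cos)
  also have "\<dots> = 2 / (1 + u^2) - 1" using pos by (simp add: cos_arctan power_divide)
  finally have c: "2 * cos (2 * arctan u) = 2 * (1 - u^2) / (1 + u^2)" using pos by (simp add: field_simps)
  have "2 * (1 - u^2) / (1 + u^2) \<in> \<rat>" using uq by simp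
  hence "2 * cos (of_int m' * pi / of_int n') \<in> \<int>" using niven2[OF n'] c h' by metis
  then obtain z :: int where z: "2 * (1 - u^2) / (1 + u^2) = of_int z" using c h' by (metis Ints_cases)
  hence zz: "2 * (1 - u^2) = of_int z * (1 + u^2)" using pos by (simp add: field_simps)
  have u2: "u^2 > 0" using u0 by simp
  have "of_int z * (1+u^2) < 2 * (1+u^2)" unfolding zz[symmetric] using u2 by simp
  hence "of_int z < (2::real)" using pos by (rule mult_right_less_imp_less[OF _ less_imp_le])
  moreover have "(-2) * (1+u^2) < of_int z * (1+u^2)" unfolding zz[symmetric] using u2 by simp
  hence "(-2::real) < of_int z" using pos by (rule mult_right_less_imp_less[OF _ less_imp_le])
  ultimately have "z = -1 \<or> z = 0 \<or> z = 1" by linarith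
  moreover have "z \<noteq> 1"
  proof
    assume "z = 1"
    hence "3 * u^2 = 1" using zz by simp
    hence "(1/u)^2 = 3" using u0 by (simp add: field_simps)
    thus False using no_rat_sqrt3[of "1/u"] uq by simp
  qed
  moreover have "z \<noteq> -1"
  proof
    assume "z = -1"
    hence "u^2 = 3" using zz by simp
    thus False using no_rat_sqrt3 uq by simp
  qed
  ultimately have "z = 0" by blast
  hence "u^2 = 1" using zz by simp
  thus ?thesis using u0 by (simp add: power2_eq_1_iff)
qed

theorem proposition1:
  fixes a0 a1 :: int and u0 u1 :: real
  assumes "u0 \<in> \<rat>" and "u1 \<in> \<rat>"
    and "0 < u1" and "u1 < u0"
    and "of_int a0 * arctan u0 + of_int a1 * arctan u1 = pi / 4"
  shows "arctan u0 / arctan u1 \<notin> \<rat>"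
proof
  assume "arctan u0 / arctan u1 \<in> \<rat>"
  then obtain p q :: int where q: "q > 0" and pq: "arctan u0 / arctan u1 = of_int p / of_int q"
    by (metis Rats_cases')
  have t1: "arctan u1 > 0" using assms(3) by (simp add: arctan_less_iff[of 0, simplified])
  define phi where "phi = arctan u1 / of_int q"
  have A1: "arctan u1 = of_int q * phi" unfolding phi_def using q by simp
  have A0: "arctan u0 = of_int p * phi" unfolding phi_def using pq t1 q by (simp add: field_simps)
  define N where "N = a0 * p + a1 * q"
  have "of_int N * phi = pi / 4" using assms(5) unfolding N_def A0 A1 by (simp add: algebra_simps)
  hence N0: "N \<noteq> 0" by auto
  have ph: "phi = pi / (4 * of_int N)" using N0 \<open>of_int N * phi = pi / 4\<close> by (simp add: field_simps)
  have N2: "2 * N \<noteq> 0" using N0 by simp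
  have k1: "2 * arctan u1 = of_int q * pi / of_int (2 * N)" unfolding A1 ph by simp
  have "u1 = 1" by (rule key[OF assms(2) assms(3) N2 k1])
  moreover have k0: "2 * arctan u0 = of_int p * pi / of_int (2 * N)" unfolding A0 ph by simp
  have u0p: "0 < u0" using assms(3,4) by simp
  have "u0 = 1" by (rule key[OF assms(1) u0p N2 k0])
  ultimately show False using assms(4) by simp
qed

end
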